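(* Let $M\ge 2$ be an integer. For all integers $1\le m\le M-1$ and all $z\in\mathbb{C}$, $$|t_m(z)|\le m^2\,2^{6m}\sup_{0\le\xi\le m}\big(\max\{|z+\xi|,M\}\big)^m.$$
   Context: For an integer $M\ge1$ and $0\le m\le M-1$, let $p_m(x)=x(x-1)\cdots(x-m+1)(x-M)(x-M-1)\cdots(x-M-m+1)$ and define the discrete Chebyshev polynomial $t_m(x)=\frac{1}{m!}\sum_{j=0}^m(-1)^j\binom{m}{j}p_m(x+m-j)$ (i.e. $\frac{1}{m!}$ times the $m$-th forward difference of $p_m$), viewed as a polynomial on $\mathbb{C}$. *)

theory Defs
  imports "HOL-Analysis.Analysis"
begin

definition cheb_p :: "nat \<Rightarrow> nat \<Rightarrow> complex \<Rightarrow> complex" where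
  "cheb_p M m x = (\<Prod>i<m. (x - of_nat i)) * (\<Prod>i<m. (x - of_nat M - of_nat i))"

definition cheb_t :: "nat \<Rightarrow> nat \<Rightarrow> complex \<Rightarrow> complex" where
  "cheb_t M m x = (1 / of_nat (fact m)) *
     (\<Sum>j\<le>m. (-1)^j * of_nat (m choose j) * cheb_p M m (x + of_nat m - of_nat j))"

end

theory Submission imports Defs begin

definition ff :: "complex \<Rightarrow> nat \<Rightarrow> complex" where
  "ff x a = (\<Prod>i<a. x - of_nat i)"
definition FF :: "nat \<Rightarrow> nat \<Rightarrow> complex \<Rightarrow> complex \<Rightarrow> complex" where
  "FF a b c x = ff x a * ff (x - c) b"
primrec DD :: "nat \<Rightarrow> (complex \<Rightarrow> complex) \<Rightarrow> complex \<Rightarrow> complex" where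
  "DD 0 f = f" | "DD (Suc n) f = DD n (\<lambda>x. f (x+1) - f x)"
definition GG :: "nat \<Rightarrow> nat \<Rightarrow> real" where
  "GG N n = real (N choose n) * fact n"

lemma DD_lin: "DD n (\<lambda>x. \<alpha> * f x + \<beta> * g x) x = \<alpha> * DD n f x + \<beta> * DD n g x"
proof (induction n arbitrary: f g)
  case 0 then show ?case by simp
next
  case (Suc n)
  have "(\<lambda>x. (\<alpha> * f (x+1) + \<beta> * g (x+1)) - (\<alpha> * f x + \<beta> * g x)) =
        (\<lambda>x. \<alpha> * (f (x+1) - f x) + \<beta> * (g (x+1) - g x))"
    by (auto simp: algebra_simps)
  then show ?case using Suc by simp
qed

lemma ff_diff: "ff (x+1) a - ff x a = of_nat a * ff x (a-1)"
proof (cases a)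
  case 0 then show ?thesis by (simp add: ff_def)
next
  case (Suc b)
  have 1: "ff (x+1) (Suc b) = (x+1) * ff x b"
    unfolding ff_def by (subst prod.lessThan_Suc_shift) (simp add: algebra_simps)
  have 2: "ff x (Suc b) = ff x b * (x - of_nat b)"
    unfolding ff_def by simp
  show ?thesis unfolding Suc 1 2 by (simp add: algebra_simps)
qed

lemma FF_diff: "FF a b c (x+1) - FF a b c x =
   of_nat a * FF (a-1) b (c-1) x + of_nat b * FF a (b-1) c x"
proof -
  have e1: "ff (x+1) a = ff x a + of_nat a * ff x (a-1)" using ff_diff[of x a] by (simp add: algebra_simps)
  have e2: "ff (x - c + 1) b = ff (x-c) b + of_nat b * ff (x-c) (b-1)" using ff_diff[of "x-c" b] by (simp add: algebra_simps)
  have e3: "x + 1 - c = x - c + 1" "x - (c - 1) = x - c + 1" by simp_all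
  show ?thesis unfolding FF_def e3 e1 e2 by (simp add: algebra_simps)
qed

lemma prod_norm_le: "K \<ge> 0 \<Longrightarrow> (\<forall>i<a. norm (f i) \<le> K) \<Longrightarrow> norm (\<Prod>i<a. (f i::complex)) \<le> K ^ a"
proof (induction a)
  case 0 then show ?case by simp
next
  case (Suc a)
  have "norm (\<Prod>i<Suc a. f i) = norm (\<Prod>i<a. f i) * norm (f a)" by (simp add: norm_mult)
  also have "\<dots> \<le> K ^ a * K" using Suc by (intro mult_mono) auto
  finally show ?case by (simp add: mult.commute)
qed

lemma GG_rec: "N \<ge> 1 \<Longrightarrow> real N * GG (N-1) n = GG N (Suc n)"
proof -
  assume "N \<ge> 1"
  then obtain N' where N: "N = Suc N'" by (cases N) auto
  have "real (Suc N') * real (N' choose n) = real (Suc N' choose Suc n) * real (Suc n)"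
    using Suc_times_binomial_eq[of N' n] by (metis of_nat_mult)
  then show ?thesis unfolding N GG_def by (simp add: algebra_simps)
qed

lemma DD_bound:
  assumes "K \<ge> 0" "\<forall>i<a. norm (x - of_nat i) \<le> K"
    "\<forall>k\<le>n. \<forall>i<b. norm (x - c + of_nat k - of_nat i) \<le> K"
  shows "norm (DD n (FF a b c) x) \<le> GG (a+b) n * K^(a+b-n)"
  using assms
proof (induction n arbitrary: a b c)
  case 0
  have "norm (ff x a) \<le> K^a" unfolding ff_def using 0 by (intro prod_norm_le) auto
  moreover have "norm (ff (x-c) b) \<le> K^b" unfolding ff_def using 0(3)
    by (intro prod_norm_le) (auto simp: 0(1))
  ultimately have "norm (FF a b c x) \<le> K^a * K^b" unfolding FF_def norm_mult
    by (intro mult_mono) (auto simp: 0(1))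
  then show ?case by (simp add: GG_def power_add)
next
  case (Suc n)
  have fe: "(\<lambda>y. FF a b c (y+1) - FF a b c y) =
      (\<lambda>y. of_nat a * FF (a-1) b (c-1) y + of_nat b * FF a (b-1) c y)"
    using FF_diff by auto
  have eq: "DD (Suc n) (FF a b c) x = of_nat a * DD n (FF (a-1) b (c-1)) x + of_nat b * DD n (FF a (b-1) c) x"
    by (simp add: fe DD_lin)
  have t1: "real a * norm (DD n (FF (a-1) b (c-1)) x) \<le> real a * (GG (a+b-1) n * K^(a+b-1-n))"
  proof (cases "a = 0")
    case True then show ?thesis by simp
  next
    case False
    have h3: "\<forall>k\<le>n. \<forall>i<b. norm (x - (c-1) + of_nat k - of_nat i) \<le> K"
    proof (intro allI impI)
      fix k i assume "k \<le> n" "i < b"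
      then have "norm (x - c + of_nat (Suc k) - of_nat i) \<le> K" using Suc.prems(3) by auto
      moreover have "x - c + of_nat (Suc k) - of_nat i = x - (c-1) + of_nat k - of_nat i" by (simp add: algebra_simps)
      ultimately show "norm (x - (c-1) + of_nat k - of_nat i) \<le> K" by metis
    qed
    have "norm (DD n (FF (a-1) b (c-1)) x) \<le> GG (a-1+b) n * K^(a-1+b-n)"
      using Suc.IH[of "a-1" b "c-1"] Suc.prems h3 by auto
    moreover have "a - 1 + b = a + b - 1" using False by simp
    ultimately show ?thesis by (intro mult_left_mono) auto
  qed
  have t2: "real b * norm (DD n (FF a (b-1) c) x) \<le> real b * (GG (a+b-1) n * K^(a+b-1-n))"
  proof (cases "b = 0")
    case True then show ?thesis by simp
  next
    case False
    have "norm (DD n (FF a (b-1) c) x) \<le> GG (a+(b-1)) n * K^(a+(b-1)-n)"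
      using Suc.IH[of a "b-1" c] Suc.prems by auto
    moreover have "a + (b - 1) = a + b - 1" using False by simp
    ultimately show ?thesis by (intro mult_left_mono) auto
  qed
  have "norm (DD (Suc n) (FF a b c) x) \<le> real a * norm (DD n (FF (a-1) b (c-1)) x) + real b * norm (DD n (FF a (b-1) c) x)"
    unfolding eq by (rule order_trans[OF norm_triangle_ineq]) (simp add: norm_mult)
  also have "\<dots> \<le> real (a+b) * GG (a+b-1) n * K^(a+b-1-n)"
    using t1 t2 by (simp add: algebra_simps)
  also have "\<dots> \<le> GG (a+b) (Suc n) * K^(a+b - Suc n)"
  proof (cases "a + b = 0")
    case True then show ?thesis by (simp add: GG_def)
  next
    case False
    then have "real (a+b) * GG (a+b-1) n = GG (a+b) (Suc n)" using GG_rec[of "a+b" n] by auto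
    moreover have "a+b-1-n = a+b - Suc n" by simp
    ultimately show ?thesis by simp
  qed
  finally show ?case .
qed

lemma DD_sum: "DD n f x = (\<Sum>j\<le>n. (-1)^j * of_nat (n choose j) * f (x + of_nat n - of_nat j))"
proof (induction n arbitrary: f)
  case 0 then show ?case by simp
next
  case (Suc n)
  define h where "h j = f (x + of_nat n + 1 - of_nat j)" for j
  define s :: "nat \<Rightarrow> complex" where "s j = (-1)^j" for j
  have hS: "f (x + of_nat n - of_nat j) = h (Suc j)" for j unfolding h_def by (simp add: algebra_simps)
  have hh: "f (x + of_nat n - of_nat j + 1) = h j" for j unfolding h_def by (simp add: algebra_simps)
  have hh2: "f (1 + (x + of_nat n) - of_nat j) = h j" for j unfolding h_def by (simp add: algebra_simps)
  have L: "DD (Suc n) f x = (\<Sum>j\<le>n. s j * of_nat (n choose j) * h j) - (\<Sum>j\<le>n. s j * of_nat (n choose j) * h (Suc j))"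
    by (simp add: Suc hS hh hh2 s_def algebra_simps sum_subtractf)
  define g where "g j = s j * of_nat (n choose j) * h j" for j
  have g1: "(\<Sum>j\<le>Suc n. g j) = g 0 + (\<Sum>j\<le>n. g (Suc j))" by (rule sum.atMost_Suc_shift)
  have g2: "(\<Sum>j\<le>Suc n. g j) = (\<Sum>j\<le>n. g j)" by (simp add: g_def)
  have A: "(\<Sum>j\<le>n. s j * of_nat (n choose j) * h j) = h 0 - (\<Sum>j\<le>n. s j * of_nat (n choose Suc j) * h (Suc j))"
    using g1 g2 unfolding g_def by (simp add: s_def sum_negf)
  have R: "(\<Sum>j\<le>Suc n. s j * of_nat (Suc n choose j) * h j) =
      h 0 - (\<Sum>j\<le>n. s j * of_nat (n choose j) * h (Suc j)) - (\<Sum>j\<le>n. s j * of_nat (n choose Suc j) * h (Suc j))"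
    by (subst sum.atMost_Suc_shift) (simp add: s_def algebra_simps sum.distrib sum_subtractf sum_negf)
  have "DD (Suc n) f x = (\<Sum>j\<le>Suc n. s j * of_nat (Suc n choose j) * h j)"
    unfolding L A R by simp
  then show ?case unfolding s_def h_def by (simp add: algebra_simps)
qed


theorem lemma3:
  fixes M m :: nat and z :: complex
  assumes "M \<ge> 2" and "1 \<le> m" and "m \<le> M - 1"
  shows "norm (cheb_t M m z) \<le>
    real m ^ 2 * 2 ^ (6 * m) *
    (SUP \<xi>\<in>{0..real m}. (max (norm (z + complex_of_real \<xi>)) (real M)) ^ m)"
proof -
  define R where "R = max (norm z) (real M)"
  define K where "K = 3 * R"
  have R0: "R \<ge> 0" unfolding R_def by simp
  have pe: "cheb_p M m = FF m m (of_nat M)"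
    by (rule ext) (simp add: cheb_p_def FF_def ff_def)
  have te: "cheb_t M m z = DD m (FF m m (of_nat M)) z / of_nat (fact m)"
    unfolding cheb_t_def DD_sum pe by simp
  have h2: "\<forall>i<m. norm (z - of_nat i) \<le> K"
  proof (intro allI impI)
    fix i assume "i < m"
    have "norm (z - of_nat i) \<le> norm z + real i" using norm_triangle_ineq4[of z "of_nat i"] by simp
    also have "\<dots> \<le> 3 * R" using \<open>i < m\<close> assms unfolding R_def by linarith
    finally show "norm (z - of_nat i) \<le> K" unfolding K_def .
  qed
  have h3: "\<forall>k\<le>m. \<forall>i<m. norm (z - of_nat M + of_nat k - of_nat i) \<le> K"
  proof (intro allI impI)
    fix k i assume ki: "k \<le> m" "i < m"
    have "z - of_nat M + of_nat k - of_nat i = z + complex_of_real (real k - real M - real i)" by simp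
    moreover have "norm (z + complex_of_real (real k - real M - real i)) \<le> norm z + norm (complex_of_real (real k - real M - real i))"
      by (rule norm_triangle_ineq)
    ultimately have "norm (z - of_nat M + of_nat k - of_nat i) \<le> norm z + \<bar>real k - real M - real i\<bar>"
      by (metis norm_of_real)
    also have "\<dots> \<le> 3 * R" using ki assms unfolding R_def by linarith
    finally show "norm (z - of_nat M + of_nat k - of_nat i) \<le> K" unfolding K_def .
  qed
  have b: "norm (DD m (FF m m (of_nat M)) z) \<le> GG (m+m) m * K^(m+m-m)"
    by (rule DD_bound) (use h2 h3 R0 K_def in auto)
  have "norm (cheb_t M m z) = norm (DD m (FF m m (of_nat M)) z) / fact m"
    unfolding te by (simp add: norm_divide)
  also have "\<dots> \<le> GG (m+m) m * K^m / fact m" using b by (simp add: divide_right_mono)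
  also have "\<dots> = real ((2*m) choose m) * K^m" by (simp add: GG_def mult_2)
  also have "\<dots> \<le> 2^(2*m) * K^m"
    using binomial_le_pow2[of "2*m" m] R0 K_def
  proof (intro mult_right_mono)
    have "real ((2*m) choose m) \<le> real ((2::nat)^(2*m))" using binomial_le_pow2[of "2*m" m] by (rule of_nat_mono)
    then show "real ((2*m) choose m) \<le> 2^(2*m)" by simp
  qed (use R0 K_def in simp)
  also have "\<dots> = 12^m * R^m" unfolding K_def by (simp add: power_mult power_mult_distrib flip: power_mult_distrib[of "4::real" 3])
  also have "\<dots> \<le> real m ^ 2 * 2 ^ (6 * m) * R^m"
  proof (intro mult_right_mono)
    have "(12::real)^m \<le> 64^m" by (intro power_mono) auto
    also have "\<dots> = 2^(6*m)" by (simp add: power_mult)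
    also have "\<dots> \<le> real m ^ 2 * 2^(6*m)" using assms by simp
    finally show "(12::real)^m \<le> real m ^ 2 * 2^(6*m)" .
  qed (use R0 in simp)
  also have "\<dots> \<le> real m ^ 2 * 2 ^ (6 * m) *
    (SUP \<xi>\<in>{0..real m}. (max (norm (z + complex_of_real \<xi>)) (real M)) ^ m)"
  proof (intro mult_left_mono)
    have "R^m = (\<lambda>\<xi>. (max (norm (z + complex_of_real \<xi>)) (real M)) ^ m) 0" unfolding R_def by simp
    also have "\<dots> \<le> (SUP \<xi>\<in>{0..real m}. (max (norm (z + complex_of_real \<xi>)) (real M)) ^ m)"
    proof (rule cSUP_upper)
      show "0 \<in> {0..real m}" by simp
      show "bdd_above ((\<lambda>\<xi>. (max (norm (z + complex_of_real \<xi>)) (real M)) ^ m) ` {0..real m})"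
      proof (rule bdd_aboveI2)
        fix \<xi> assume "\<xi> \<in> {0..real m}"
        then have "norm (z + complex_of_real \<xi>) \<le> norm z + real m"
          using norm_triangle_ineq[of z "complex_of_real \<xi>"] by auto
        then have "max (norm (z + complex_of_real \<xi>)) (real M) \<le> norm z + real m + real M" by auto
        then show "(max (norm (z + complex_of_real \<xi>)) (real M)) ^ m \<le> (norm z + real m + real M)^m"
          by (intro power_mono) auto
      qed
    qed
    finally show "R^m \<le> (SUP \<xi>\<in>{0..real m}. (max (norm (z + complex_of_real \<xi>)) (real M)) ^ m)" .
  qed simp
  finally show ?thesis .
qed

end
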